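(* Let $d\ge 1$, $L>0$, $\rho>0$, $D_x>0$, $D_\theta\ge 0$, and $J_0,J,K\in\mathbb{R}$. Let $\Omega=\mathbb{R}^d/L\mathbb{Z}^d$ and $\mathbb{T}=\mathbb{R}/2\pi\mathbb{Z}$, let $T>0$, and let $R\in C^2([0,T)\times\Omega\times\mathbb{T})$ be a (real-valued, classical) solution of $$\partial_t R = D_x\nabla^2 R-\nabla\cdot\big(v_1(t,x,\theta;R)\,R\big)+D_\theta\,\partial_\theta^2 R-\partial_\theta\big(v_2(t,x,\theta;R)\,R\big),$$ with $v_1,v_2$ as defined in the context. Suppose the initial condition $R(0,x,\theta)=R_0(x,\theta)$ is a nonnegative continuous function. Then $R(t,x,\theta)\ge 0$ for all $0\le t<T$, $x\in\Omega$, $\theta\in\mathbb{T}$.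
   Context: Here $\nabla$, $\nabla\cdot$, $\nabla^2$ act in the spatial variable $x$; functions on $\Omega$ and $\mathbb{T}$ are identified with functions on $\mathbb{R}^d$ (resp. $\mathbb{R}$) that are $L$-periodic in each coordinate (resp. $2\pi$-periodic), so $x+\tilde x$ is understood modulo $L\mathbb{Z}^d$. $D_\rho(0)\subset\mathbb{R}^d$ is the open ball of radius $\rho$ centered at $0$. The velocities are $$v_1(t,x,\theta;R)=\int_0^{2\pi}\int_{D_\rho(0)}\big(J_0+J\cos(\theta-\tilde\theta)\big)\,R(t,x+\tilde x,\tilde\theta)\,\frac{\tilde x}{|\tilde x|}\,d^d\tilde x\,d\tilde\theta,$$ $$v_2(t,x,\theta;R)=K\int_0^{2\pi}\int_{D_\rho(0)}\sin(\tilde\theta-\theta)\,R(t,x+\tilde x,\tilde\theta)\,d^d\tilde x\,d\tilde\theta.$$ *)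

theory Defs
  imports "HOL-Analysis.Analysis"
begin

type_synonym 'd field = "real \<Rightarrow> real ^ 'd \<Rightarrow> real \<Rightarrow> real"

definition partial_t :: "('d::finite) field \<Rightarrow> 'd field" where
  "partial_t F t x th = deriv (\<lambda>s. F s x th) t"

definition partial_x :: "('d::finite) \<Rightarrow> 'd field \<Rightarrow> 'd field" where
  "partial_x i F t x th = deriv (\<lambda>s. F t (x + s *\<^sub>R axis i 1) th) 0"

definition partial_th :: "('d::finite) field \<Rightarrow> 'd field" where
  "partial_th F t x th = deriv (\<lambda>s. F t x s) th"

definition laplace_x :: "('d::finite) field \<Rightarrow> 'd field" where
  "laplace_x F t x th = (\<Sum>i\<in>UNIV. partial_x i (partial_x i F) t x th)"

definition div_x :: "(real \<Rightarrow> real ^ ('d::finite) \<Rightarrow> real \<Rightarrow> real ^ 'd) \<Rightarrow> 'd field" where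
  "div_x G t x th = (\<Sum>i\<in>UNIV. partial_x i (\<lambda>s y a. G s y a $ i) t x th)"

definition uncurry3 :: "('d::finite) field \<Rightarrow> real \<times> (real ^ 'd) \<times> real \<Rightarrow> real" where
  "uncurry3 F p = F (fst p) (fst (snd p)) (snd (snd p))"

definition C2_on :: "('a::euclidean_space) set \<Rightarrow> ('a \<Rightarrow> real) \<Rightarrow> bool" where
  "C2_on S f \<longleftrightarrow> (\<exists>(f1 :: 'a \<Rightarrow> 'a \<Rightarrow>\<^sub>L real) (f2 :: 'a \<Rightarrow> 'a \<Rightarrow>\<^sub>L ('a \<Rightarrow>\<^sub>L real)).
      (\<forall>p\<in>S. (f has_derivative blinfun_apply (f1 p)) (at p within S)) \<and> continuous_on S f1 \<and>
      (\<forall>p\<in>S. (f1 has_derivative blinfun_apply (f2 p)) (at p within S)) \<and> continuous_on S f2)"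

text \<open>Periodicity: functions on Omega = R^d / L Z^d and T = R / 2 pi Z.\<close>
definition periodic_field :: "real \<Rightarrow> ('d::finite) field \<Rightarrow> bool" where
  "periodic_field L F \<longleftrightarrow>
     (\<forall>t x th i. F t (x + L *\<^sub>R axis i 1) th = F t x th) \<and>
     (\<forall>t x th. F t x (th + 2 * pi) = F t x th)"

definition v1 :: "real \<Rightarrow> real \<Rightarrow> real \<Rightarrow> ('d::finite) field \<Rightarrow> real \<Rightarrow> real ^ 'd \<Rightarrow> real \<Rightarrow> real ^ 'd" where
  "v1 J0 J \<rho> R t x th = integral {0..2*pi} (\<lambda>th'.
      integral (ball 0 \<rho>) (\<lambda>y. ((J0 + J * cos (th - th')) * R t (x + y) th' / norm y) *\<^sub>R y))"

definition v2 :: "real \<Rightarrow> real \<Rightarrow> ('d::finite) field \<Rightarrow> real \<Rightarrow> real ^ 'd \<Rightarrow> real \<Rightarrow> real" where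
  "v2 K \<rho> R t x th = K * integral {0..2*pi} (\<lambda>th'.
      integral (ball 0 \<rho>) (\<lambda>y. sin (th' - th) * R t (x + y) th'))"

end

theory Submission
  imports Defs
begin

lemma int_ball_gen:
  fixes a :: "'a::euclidean_space \<Rightarrow> real" and k :: "'a \<Rightarrow> 'b::euclidean_space"
  assumes a: "continuous_on (cball 0 r) a" and k: "k \<in> borel_measurable lebesgue"
    and kb: "\<And>y. norm (k y) \<le> 1"
  shows "(\<lambda>y. a y *\<^sub>R k y) integrable_on ball 0 r"
proof -
  have "compact (a ` cball 0 r)" by (rule compact_continuous_image[OF a compact_cball])
  then have "bounded (a ` cball 0 r)" by (rule compact_imp_bounded)
  then obtain B where B0: "\<forall>z\<in>a ` cball 0 r. norm z \<le> B" unfolding bounded_iff by blast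
  have B: "\<And>y. y \<in> cball 0 r \<Longrightarrow> norm (a y) \<le> B" using B0 by blast
  have am: "a \<in> borel_measurable (lebesgue_on (ball 0 r))"
    using continuous_imp_measurable_on_sets_lebesgue[of "ball 0 r" a] a
    using continuous_on_subset[OF a ball_subset_cball] by simp
  have km: "k \<in> borel_measurable (lebesgue_on (ball 0 r))"
    using k by (simp add: measurable_restrict_space1)
  have "(\<lambda>y. a y *\<^sub>R k y) absolutely_integrable_on ball 0 r"
  proof (rule measurable_bounded_by_integrable_imp_absolutely_integrable[where g="\<lambda>_. B"])
    show "(\<lambda>y. a y *\<^sub>R k y) \<in> borel_measurable (lebesgue_on (ball 0 r))"
      using am km by measurable
    show "ball 0 r \<in> sets lebesgue" by simp
    show "(\<lambda>_. B) integrable_on ball 0 r" by (simp add: integrable_on_const)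
    fix y :: 'a assume "y \<in> ball 0 r"
    then have "norm (a y) \<le> B" using B by auto
    moreover have "\<bar>a y\<bar> * norm (k y) \<le> \<bar>a y\<bar> * 1" by (rule mult_left_mono[OF kb abs_ge_zero])
    ultimately show "norm (a y *\<^sub>R k y) \<le> B" by simp
  qed
  then show ?thesis using set_lebesgue_integral_eq_integral(1) by blast
qed

lemma int_bound:
  fixes f :: "'a::euclidean_space \<Rightarrow> 'b::euclidean_space"
  assumes S: "S \<in> lmeasurable" and f: "f integrable_on S" and b: "\<And>y. y \<in> S \<Longrightarrow> norm (f y) \<le> B"
  shows "norm (integral S f) \<le> B * measure lebesgue S"
proof -
  have "norm (integral S f) \<le> integral S (\<lambda>_. B)"
    by (rule integral_norm_bound_integral[OF f]) (use S b integrable_on_const in auto)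
  also have "integral S (\<lambda>_. B) = integral S (\<lambda>_. B *\<^sub>R (1::real))" by simp
  also have "\<dots> = B * measure lebesgue S" using lmeasure_integral[OF S] by (simp only: integral_cmul) simp
  finally show ?thesis .
qed

lemma quad_vderiv:
  fixes F :: "real \<Rightarrow> 'b::real_normed_vector"
  assumes "\<delta> > 0" and q: "\<And>h. \<bar>h\<bar> \<le> \<delta> \<Longrightarrow> norm (F (s+h) - F s - h *\<^sub>R D) \<le> M * h^2"
  shows "(F has_vector_derivative D) (at s)"
  unfolding has_vector_derivative_def has_derivative_at_alt
proof (intro conjI allI impI)
  show "bounded_linear (\<lambda>h. h *\<^sub>R D)" by (simp add: bounded_linear_scaleR_left)
  fix e :: real assume e: "e > 0"
  define d where "d = min \<delta> (e / (\<bar>M\<bar> + 1))"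
  have d: "d > 0" using e assms by (simp add: d_def)
  show "\<exists>d>0. \<forall>y. norm (y - s) < d \<longrightarrow> norm (F y - F s - (y - s) *\<^sub>R D) \<le> e * norm (y - s)"
  proof (intro exI[of _ d] conjI allI impI d)
    fix y assume y: "norm (y - s) < d"
    define h where "h = y - s"
    have h1: "\<bar>h\<bar> \<le> \<delta>" using y by (simp add: h_def d_def)
    have h2: "\<bar>h\<bar> * (\<bar>M\<bar> + 1) \<le> e" using y
    proof -
      have "\<bar>h\<bar> \<le> e / (\<bar>M\<bar> + 1)" using y by (simp add: h_def d_def)
      then show ?thesis by (simp add: pos_le_divide_eq add_nonneg_pos)
    qed
    have "norm (F y - F s - (y - s) *\<^sub>R D) \<le> M * h^2" using q[OF h1] by (simp add: h_def)
    also have "\<dots> \<le> (\<bar>M\<bar> + 1) * h^2" by (rule mult_right_mono) auto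
    also have "\<dots> = (\<bar>M\<bar> + 1) * \<bar>h\<bar> * \<bar>h\<bar>"
      by (simp add: power2_eq_square)
    also have "\<dots> \<le> e * \<bar>h\<bar>" using mult_right_mono[OF h2 abs_ge_zero[of h]] by (simp add: algebra_simps)
    finally show "norm (F y - F s - (y - s) *\<^sub>R D) \<le> e * norm (y - s)" by (simp add: h_def)
  qed
qed

lemma param_deriv:
  fixes f :: "real \<Rightarrow> 'a::euclidean_space \<Rightarrow> 'b::euclidean_space"
  assumes S: "S \<in> lmeasurable"
    and fi: "\<And>h. \<bar>h\<bar> \<le> 1 \<Longrightarrow> f h integrable_on S" and gi: "g integrable_on S"
    and q: "\<And>h y. \<bar>h\<bar> \<le> 1 \<Longrightarrow> y \<in> S \<Longrightarrow> norm (f h y - f 0 y - h *\<^sub>R g y) \<le> M * h^2"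
  shows "((\<lambda>s. integral S (f s)) has_vector_derivative integral S g) (at 0)"
proof (rule quad_vderiv[where \<delta>=1 and M="M * measure lebesgue S"])
  fix h :: real assume h: "\<bar>h\<bar> \<le> 1"
  have "integral S (f (0+h)) - integral S (f 0) - h *\<^sub>R integral S g
     = integral S (\<lambda>y. f h y - f 0 y - h *\<^sub>R g y)"
    using fi[OF h] fi[of 0] gi
    by (simp add: integral_diff integrable_diff integrable_cmul)
  also have "norm \<dots> \<le> M * h^2 * measure lebesgue S"
    using fi[OF h] fi[of 0] gi q[OF h] S
    by (intro int_bound) (auto intro!: integrable_diff integrable_cmul)
  finally show "norm (integral S (f (0+h)) - integral S (f 0) - h *\<^sub>R integral S g)
      \<le> M * measure lebesgue S * h^2" by (simp add: algebra_simps)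
qed simp

lemma cont_param:
  fixes a :: "real \<Rightarrow> 'a::euclidean_space \<Rightarrow> real" and k :: "'a \<Rightarrow> 'b::euclidean_space"
  assumes a: "continuous_on ({lo..hi} \<times> cball 0 r) (\<lambda>(p,y). a p y)"
    and ai: "\<And>p. p \<in> {lo..hi} \<Longrightarrow> (\<lambda>y. a p y *\<^sub>R k y) integrable_on ball 0 r"
    and kb: "\<And>y. norm (k y) \<le> 1"
  shows "continuous_on {lo..hi} (\<lambda>p. integral (ball 0 r) (\<lambda>y. a p y *\<^sub>R k y))"
proof -
  let ?\<mu> = "measure lebesgue (ball (0::'a) r)"
  have uc: "uniformly_continuous_on ({lo..hi} \<times> cball 0 r) (\<lambda>(p,y). a p y)"
    by (rule compact_uniformly_continuous[OF a]) (simp add: compact_Times)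
  show ?thesis unfolding continuous_on_iff
  proof (intro ballI allI impI)
    fix p e :: real assume p: "p \<in> {lo..hi}" and e: "e > 0"
    obtain d where d: "d > 0" and dd: "\<And>x x'. x \<in> {lo..hi} \<times> cball 0 r \<Longrightarrow> x' \<in> {lo..hi} \<times> cball 0 r
        \<Longrightarrow> dist x' x < d \<Longrightarrow> dist ((\<lambda>(p,y). a p y) x') ((\<lambda>(p,y). a p y) x) < e / (?\<mu> + 1)"
    proof -
      have e': "e / (?\<mu> + 1) > 0" using e by (intro divide_pos_pos) (auto intro: add_nonneg_pos)
      show ?thesis using uc[unfolded uniformly_continuous_on_def, rule_format, OF e'] that by blast
    qed
    show "\<exists>d>0. \<forall>p'\<in>{lo..hi}. dist p' p < d \<longrightarrow>
        dist (integral (ball 0 r) (\<lambda>y. a p' y *\<^sub>R k y)) (integral (ball 0 r) (\<lambda>y. a p y *\<^sub>R k y)) < e"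
    proof (intro exI[of _ d] conjI ballI impI d)
      fix p' assume p': "p' \<in> {lo..hi}" and pp: "dist p' p < d"
      have b: "norm ((a p' y - a p y) *\<^sub>R k y) \<le> e / (?\<mu> + 1)" if y: "y \<in> ball 0 r" for y
      proof -
        have "dist (a p' y) (a p y) < e / (?\<mu> + 1)"
          using dd[of "(p,y)" "(p',y)"] p p' y pp by (auto simp: dist_Pair_Pair)
        then have "\<bar>a p' y - a p y\<bar> \<le> e / (?\<mu> + 1)" by (simp add: dist_real_def)
        then show ?thesis using kb[of y]
          by (simp add: mult_le_one) (metis abs_ge_zero mult_left_le order_trans norm_ge_zero)
      qed
      have "dist (integral (ball 0 r) (\<lambda>y. a p' y *\<^sub>R k y)) (integral (ball 0 r) (\<lambda>y. a p y *\<^sub>R k y))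
          = norm (integral (ball 0 r) (\<lambda>y. (a p' y - a p y) *\<^sub>R k y))"
        using ai[OF p] ai[OF p'] by (simp add: dist_norm integral_diff[symmetric] scaleR_diff_left)
      also have "\<dots> \<le> e / (?\<mu> + 1) * ?\<mu>"
        using ai[OF p] ai[OF p'] b
        by (intro int_bound) (auto simp: scaleR_diff_left intro!: integrable_diff)
      also have "\<dots> < e"
      proof -
        have m: "?\<mu> \<ge> 0" by (rule measure_nonneg)
        have "?\<mu> / (?\<mu> + 1) < 1" using m by (subst divide_less_eq_1_pos) linarith+
        then have "e * (?\<mu> / (?\<mu> + 1)) < e * 1" using e by (intro mult_strict_left_mono) auto
        then show ?thesis by (simp add: divide_simps)
      qed
      finally show "dist (integral (ball 0 r) (\<lambda>y. a p' y *\<^sub>R k y)) (integral (ball 0 r) (\<lambda>y. a p y *\<^sub>R k y)) < e" .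
    qed
  qed
qed

lemma line_d1:
  fixes F :: "'a::real_normed_vector \<Rightarrow> real"
  assumes "(F has_derivative blinfun_apply (F1 (q + r *\<^sub>R w))) (at (q + r *\<^sub>R w))"
  shows "((\<lambda>r. F (q + r *\<^sub>R w)) has_real_derivative blinfun_apply (F1 (q + r *\<^sub>R w)) w) (at r)"
proof -
  have l: "((\<lambda>r. q + r *\<^sub>R w) has_derivative (\<lambda>h. h *\<^sub>R w)) (at r)"
    by (auto intro!: derivative_eq_intros)
  show ?thesis
    by (rule has_derivative_imp_has_field_derivative[OF has_derivative_compose[OF l assms]])
      (simp add: blinfun.scaleR_right)
qed

lemma line_d2:
  fixes F1 :: "'a::real_normed_vector \<Rightarrow> 'a \<Rightarrow>\<^sub>L real"
  assumes "(F1 has_derivative blinfun_apply (F2 (q + r *\<^sub>R w))) (at (q + r *\<^sub>R w))"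
  shows "((\<lambda>r. blinfun_apply (F1 (q + r *\<^sub>R w)) v) has_real_derivative
      blinfun_apply (blinfun_apply (F2 (q + r *\<^sub>R w)) w) v) (at r)"
proof -
  have l: "((\<lambda>r. q + r *\<^sub>R w) has_derivative (\<lambda>h. h *\<^sub>R w)) (at r)"
    by (auto intro!: derivative_eq_intros)
  have bl: "bounded_linear (\<lambda>f::'a \<Rightarrow>\<^sub>L real. blinfun_apply f v)"
    by (rule bounded_bilinear.bounded_linear_left[OF bounded_bilinear_blinfun_apply])
  show ?thesis
    by (rule has_derivative_imp_has_field_derivative[OF bounded_linear.has_derivative[OF bl has_derivative_compose[OF l assms]]])
      (simp add: blinfun.scaleR_right blinfun.scaleR_left)
qed

lemma mvt_abs:
  fixes f f' :: "real \<Rightarrow> real"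
  assumes d: "\<And>r. \<bar>r\<bar> \<le> \<bar>h\<bar> \<Longrightarrow> (f has_real_derivative f' r) (at r)"
    and b: "\<And>r. \<bar>r\<bar> \<le> \<bar>h\<bar> \<Longrightarrow> \<bar>f' r\<bar> \<le> B"
  shows "\<bar>f h - f 0\<bar> \<le> B * \<bar>h\<bar>"
proof (cases h "0::real" rule: linorder_cases)
  case less
  have dd: "\<And>x. h \<le> x \<Longrightarrow> x \<le> 0 \<Longrightarrow> (f has_real_derivative f' x) (at x)"
    using less by (intro d) (simp add: abs_if)
  obtain z where z: "h < z" "z < 0" "f 0 - f h = (0 - h) * f' z"
    using MVT2[OF less, of f f', OF dd] by blast
  have bz: "\<bar>f' z\<bar> \<le> B" using z less by (intro b) (simp add: abs_if)
  have "\<bar>f h - f 0\<bar> = \<bar>f' z\<bar> * \<bar>h\<bar>" using z by (simp add: abs_mult abs_minus_commute)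
  also have "\<dots> \<le> B * \<bar>h\<bar>" by (rule mult_right_mono[OF bz abs_ge_zero])
  finally show ?thesis .
next
  case greater
  have dd: "\<And>x. 0 \<le> x \<Longrightarrow> x \<le> h \<Longrightarrow> (f has_real_derivative f' x) (at x)"
    using greater by (intro d) (simp add: abs_if)
  obtain z where z: "0 < z" "z < h" "f h - f 0 = (h - 0) * f' z"
    using MVT2[OF greater, of f f', OF dd] by blast
  have bz: "\<bar>f' z\<bar> \<le> B" using z greater by (intro b) (simp add: abs_if)
  have "\<bar>f h - f 0\<bar> = \<bar>f' z\<bar> * \<bar>h\<bar>" using z by (simp add: abs_mult)
  also have "\<dots> \<le> B * \<bar>h\<bar>" by (rule mult_right_mono[OF bz abs_ge_zero])
  finally show ?thesis .
qed simp

lemma taylor_quad: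
  fixes \<phi> \<phi>1 \<phi>2 :: "real \<Rightarrow> real"
  assumes d1: "\<And>r. \<bar>r\<bar> \<le> \<bar>h\<bar> \<Longrightarrow> (\<phi> has_real_derivative \<phi>1 r) (at r)"
    and d2: "\<And>r. \<bar>r\<bar> \<le> \<bar>h\<bar> \<Longrightarrow> (\<phi>1 has_real_derivative \<phi>2 r) (at r)"
    and b: "\<And>r. \<bar>r\<bar> \<le> \<bar>h\<bar> \<Longrightarrow> \<bar>\<phi>2 r\<bar> \<le> M"
  shows "\<bar>\<phi> h - \<phi> 0 - h * \<phi>1 0\<bar> \<le> M * h^2"
proof -
  have M: "M \<ge> 0" using b[of 0] by auto
  have b1: "\<bar>\<phi>1 r - \<phi>1 0\<bar> \<le> M * \<bar>h\<bar>" if r: "\<bar>r\<bar> \<le> \<bar>h\<bar>" for r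
  proof -
    have "\<bar>\<phi>1 r - \<phi>1 0\<bar> \<le> M * \<bar>r\<bar>"
      by (rule mvt_abs[where h=r and f=\<phi>1 and f'=\<phi>2]) (use d2 b r in auto)
    also have "\<dots> \<le> M * \<bar>h\<bar>" using M r by (simp add: mult_left_mono)
    finally show ?thesis .
  qed
  have "\<bar>(\<phi> h - h * \<phi>1 0) - (\<phi> 0 - 0 * \<phi>1 0)\<bar> \<le> (M * \<bar>h\<bar>) * \<bar>h\<bar>"
  proof (rule mvt_abs[where f="\<lambda>r. \<phi> r - r * \<phi>1 0" and f'="\<lambda>r. \<phi>1 r - \<phi>1 0"])
    fix r assume r: "\<bar>r\<bar> \<le> \<bar>h\<bar>"
    show "((\<lambda>r. \<phi> r - r * \<phi>1 0) has_real_derivative \<phi>1 r - \<phi>1 0) (at r)"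
      using d1[OF r] by (auto intro!: derivative_eq_intros)
    show "\<bar>\<phi>1 r - \<phi>1 0\<bar> \<le> M * \<bar>h\<bar>" using b1[OF r] .
  qed
  then show ?thesis by (simp add: power2_eq_square algebra_simps)
qed

lemma min2:
  fixes \<phi> \<phi>1 :: "real \<Rightarrow> real"
  assumes d1: "\<And>r. (\<phi> has_real_derivative \<phi>1 r) (at r)"
    and d2: "(\<phi>1 has_real_derivative D) (at c)"
    and mn: "\<And>r. \<phi> c \<le> \<phi> r"
  shows "\<phi>1 c = 0" and "D \<ge> 0"
proof -
  show z0: "\<phi>1 c = 0" using DERIV_local_min[OF d1[of c], of 1] mn by auto
  show "D \<ge> 0"
  proof (rule ccontr)
    assume "\<not> D \<ge> 0"
    then have "D < 0" by simp
    then obtain d where d: "d > 0" and dd: "\<And>h. h > 0 \<Longrightarrow> h < d \<Longrightarrow> \<phi>1 c > \<phi>1 (c + h)"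
      using DERIV_neg_dec_right[OF d2] by blast
    define h where "h = d / 2"
    have h: "0 < h" "h < d" using d by (auto simp: h_def)
    have ch: "c < c + h" using h by simp
    obtain z where z: "c < z" "z < c + h" "\<phi> (c + h) - \<phi> c = (c + h - c) * \<phi>1 z"
      using MVT2[OF ch, of \<phi> \<phi>1] d1 by blast
    have "\<phi>1 (c + (z - c)) < \<phi>1 c" using dd[of "z - c"] z h by simp
    then have "\<phi>1 z < 0" using z0 by simp
    then have "\<phi> (c + h) - \<phi> c < 0" using z h by (simp add: mult_pos_neg)
    then show False using mn[of "c + h"] by simp
  qed
qed

lemma sgn_meas: "(sgn :: 'a::euclidean_space \<Rightarrow> 'a) \<in> borel_measurable lebesgue"
  by (simp add: measurable_completion)

lemma norm_sgn_le: "norm (sgn (y::'a::real_normed_vector)) \<le> 1"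
  by (simp add: norm_sgn)

lemma int_ball_sgn:
  fixes a :: "'a::euclidean_space \<Rightarrow> real"
  assumes "continuous_on (cball 0 r) a"
  shows "(\<lambda>y. a y *\<^sub>R sgn y) integrable_on ball 0 r"
  by (rule int_ball_gen[OF assms sgn_meas norm_sgn_le])

lemma int_ball_one:
  fixes a :: "'a::euclidean_space \<Rightarrow> real"
  assumes "continuous_on (cball 0 r) a"
  shows "(\<lambda>y. a y *\<^sub>R (1::real)) integrable_on ball 0 r"
  by (rule int_ball_gen[OF assms]) auto

lemma abs_c_le: "\<bar>J0 + J * cos (u::real)\<bar> \<le> \<bar>J0\<bar> + \<bar>J\<bar>"
proof -
  have "\<bar>J * cos u\<bar> \<le> \<bar>J\<bar> * 1" unfolding abs_mult by (rule mult_left_mono) auto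
  then show ?thesis by linarith
qed

lemma v1_integrand: "((c * r / norm y) *\<^sub>R y) = (c * r) *\<^sub>R sgn (y::'a::real_normed_vector)"
  by (simp add: sgn_div_norm divide_inverse)


lemma v1_deriv:
  fixes R :: "real \<Rightarrow> real^'d \<Rightarrow> real \<Rightarrow> real" and Rx :: "real^'d \<Rightarrow> real \<Rightarrow> real"
    and e x :: "real^'d"
  assumes rho: "\<rho> > 0"
    and Rc: "continuous_on UNIV (\<lambda>z::(real^'d) \<times> real. R t (fst z) (snd z))"
    and Rxc: "continuous_on UNIV (\<lambda>z::(real^'d) \<times> real. Rx (fst z) (snd z))"
    and tay: "\<And>y th' h. y \<in> ball 0 \<rho> \<Longrightarrow> th' \<in> {0..2*pi} \<Longrightarrow> \<bar>h\<bar> \<le> 1 \<Longrightarrow>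
       \<bar>R t (x + h *\<^sub>R e + y) th' - R t (x + y) th' - h * Rx (x + y) th'\<bar> \<le> M2 * h^2"
    and bx: "\<And>y th'. y \<in> ball 0 \<rho> \<Longrightarrow> th' \<in> {0..2*pi} \<Longrightarrow> \<bar>Rx (x + y) th'\<bar> \<le> M1"
  shows "\<exists>D. ((\<lambda>s. v1 J0 J \<rho> R t (x + s *\<^sub>R e) th) has_vector_derivative D) (at 0) \<and>
     norm D \<le> 2*pi * (measure lebesgue (ball (0::real^'d) \<rho>) * ((\<bar>J0\<bar>+\<bar>J\<bar>) * M1))"
proof -
  let ?\<mu> = "measure lebesgue (ball (0::real^'d) \<rho>)"
  define c where "c th' = J0 + J * cos (th - th')" for th'
  have cb: "\<bar>c th'\<bar> \<le> \<bar>J0\<bar> + \<bar>J\<bar>" for th' unfolding c_def by (rule abs_c_le)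
  have cc: "continuous_on A (\<lambda>z. c (X z))" if "continuous_on A X" for A and X :: "'z::metric_space \<Rightarrow> real"
    unfolding c_def by (intro continuous_intros that)
  have RC: "continuous_on A (\<lambda>z. R t (X z) (Y z))"
    if "continuous_on A X" "continuous_on A Y" for A and X :: "'z::metric_space \<Rightarrow> real^'d" and Y
    using continuous_on_compose2[OF Rc, of A "\<lambda>z. (X z, Y z)"] that
    by (simp add: continuous_on_Pair)
  have RxC: "continuous_on A (\<lambda>z. Rx (X z) (Y z))"
    if "continuous_on A X" "continuous_on A Y" for A and X :: "'z::metric_space \<Rightarrow> real^'d" and Y
    using continuous_on_compose2[OF Rxc, of A "\<lambda>z. (X z, Y z)"] that
    by (simp add: continuous_on_Pair)
  define f where "f h th' = integral (ball 0 \<rho>) (\<lambda>y. (c th' * R t (x + h *\<^sub>R e + y) th') *\<^sub>R sgn y)" for h th'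
  define G where "G th' = integral (ball 0 \<rho>) (\<lambda>y. (c th' * Rx (x + y) th') *\<^sub>R sgn y)" for th'
  have v1eq: "v1 J0 J \<rho> R t (x + s *\<^sub>R e) th = integral {0..2*pi} (f s)" for s
    unfolding v1_def f_def c_def v1_integrand by (simp add: add.assoc)
  have fin: "(\<lambda>y. (c th' * R t (x + h *\<^sub>R e + y) th') *\<^sub>R sgn y) integrable_on ball 0 \<rho>" for h th'
    by (intro int_ball_sgn continuous_intros RC; auto)
  have Gin: "(\<lambda>y. (c th' * Rx (x + y) th') *\<^sub>R sgn y) integrable_on ball 0 \<rho>" for th'
    by (intro int_ball_sgn continuous_intros RxC; auto)
  have fc: "continuous_on {0..2*pi} (f h)" for h
    unfolding f_def
    by (rule cont_param[OF _ fin norm_sgn_le]) (simp only: split_def, intro continuous_intros RC cc)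
  have Gc: "continuous_on {0..2*pi} G"
    unfolding G_def
    by (rule cont_param[OF _ Gin norm_sgn_le]; simp only: split_def; intro continuous_intros RxC cc)
  have der: "((\<lambda>s. integral {0..2*pi} (f s)) has_vector_derivative integral {0..2*pi} G) (at 0)"
  proof (rule param_deriv[where M="?\<mu> * ((\<bar>J0\<bar>+\<bar>J\<bar>) * M2)"])
    show "{0..2*pi} \<in> lmeasurable" by simp
    show "f h integrable_on {0..2*pi}" for h by (rule integrable_continuous_interval[OF fc])
    show "G integrable_on {0..2*pi}" by (rule integrable_continuous_interval[OF Gc])
    fix h th' :: real assume h: "\<bar>h\<bar> \<le> 1" and th': "th' \<in> {0..2*pi}"
    have "f h th' - f 0 th' - h *\<^sub>R G th' =
        integral (ball 0 \<rho>) (\<lambda>y. (c th' * (R t (x + h *\<^sub>R e + y) th' - R t (x + y) th' - h * Rx (x + y) th')) *\<^sub>R sgn y)"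
    proof -
      let ?F1 = "\<lambda>y. (c th' * R t (x + h *\<^sub>R e + y) th') *\<^sub>R sgn y"
      let ?F2 = "\<lambda>y. (c th' * R t (x + 0 *\<^sub>R e + y) th') *\<^sub>R sgn y"
      let ?F3 = "\<lambda>y. (c th' * Rx (x + y) th') *\<^sub>R sgn y"
      have eq: "(\<lambda>y. (c th' * (R t (x + h *\<^sub>R e + y) th' - R t (x + y) th' - h * Rx (x + y) th')) *\<^sub>R sgn y)
          = (\<lambda>y. (?F1 y - ?F2 y) - h *\<^sub>R ?F3 y)"
        by (rule ext) (simp add: algebra_simps)
      have "integral (ball 0 \<rho>) (\<lambda>y. (?F1 y - ?F2 y) - h *\<^sub>R ?F3 y)
          = integral (ball 0 \<rho>) (\<lambda>y. ?F1 y - ?F2 y) - integral (ball 0 \<rho>) (\<lambda>y. h *\<^sub>R ?F3 y)"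
        by (rule integral_diff[OF integrable_diff[OF fin fin] integrable_cmul[OF Gin]])
      also have "\<dots> = integral (ball 0 \<rho>) ?F1 - integral (ball 0 \<rho>) ?F2 - h *\<^sub>R integral (ball 0 \<rho>) ?F3"
        by (simp only: integral_diff[OF fin fin] integral_cmul)
      finally show ?thesis unfolding eq f_def G_def by simp
    qed
    also have "norm \<dots> \<le> ((\<bar>J0\<bar>+\<bar>J\<bar>) * M2 * h^2) * ?\<mu>"
    proof (rule int_bound)
      show "(\<lambda>y. (c th' * (R t (x + h *\<^sub>R e + y) th' - R t (x + y) th' - h * Rx (x + y) th')) *\<^sub>R sgn y) integrable_on ball 0 \<rho>"
        by (intro int_ball_sgn continuous_intros RC RxC; auto)
      fix y :: "real^'d" assume y: "y \<in> ball 0 \<rho>"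
      have "\<bar>c th' * (R t (x + h *\<^sub>R e + y) th' - R t (x + y) th' - h * Rx (x + y) th')\<bar> \<le> (\<bar>J0\<bar>+\<bar>J\<bar>) * (M2 * h^2)"
        unfolding abs_mult by (intro mult_mono cb tay y th' h; auto)
      moreover have "norm (sgn y) \<le> 1" by (rule norm_sgn_le)
      ultimately show "norm ((c th' * (R t (x + h *\<^sub>R e + y) th' - R t (x + y) th' - h * Rx (x + y) th')) *\<^sub>R sgn y)
          \<le> (\<bar>J0\<bar>+\<bar>J\<bar>) * M2 * h^2"
        by (simp add: mult.assoc) (metis abs_ge_zero mult_left_le order_trans)
    qed simp
    finally show "norm (f h th' - f 0 th' - h *\<^sub>R G th') \<le> ?\<mu> * ((\<bar>J0\<bar>+\<bar>J\<bar>) * M2) * h^2"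
      by (simp add: algebra_simps)
  qed
  have "norm (integral {0..2*pi} G) \<le> (?\<mu> * ((\<bar>J0\<bar>+\<bar>J\<bar>) * M1)) * measure lebesgue {0..2*pi}"
  proof (rule int_bound)
    show "G integrable_on {0..2*pi}" by (rule integrable_continuous_interval[OF Gc])
    fix th' :: real assume th': "th' \<in> {0..2*pi}"
    have "norm (G th') \<le> ((\<bar>J0\<bar>+\<bar>J\<bar>) * M1) * ?\<mu>"
      unfolding G_def
    proof (rule int_bound[OF _ Gin])
      fix y :: "real^'d" assume y: "y \<in> ball 0 \<rho>"
      have "\<bar>c th' * Rx (x + y) th'\<bar> \<le> (\<bar>J0\<bar>+\<bar>J\<bar>) * M1"
        unfolding abs_mult by (intro mult_mono cb bx y th'; auto)
      moreover have "\<bar>c th' * Rx (x + y) th'\<bar> * norm (sgn y) \<le> \<bar>c th' * Rx (x + y) th'\<bar> * 1"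
        by (rule mult_left_mono[OF norm_sgn_le abs_ge_zero])
      ultimately show "norm ((c th' * Rx (x + y) th') *\<^sub>R sgn y) \<le> (\<bar>J0\<bar>+\<bar>J\<bar>) * M1" by simp
    qed simp
    then show "norm (G th') \<le> ?\<mu> * ((\<bar>J0\<bar>+\<bar>J\<bar>) * M1)" by (simp add: mult.commute)
  qed simp
  then have nb: "norm (integral {0..2*pi} G) \<le> 2*pi * (?\<mu> * ((\<bar>J0\<bar>+\<bar>J\<bar>) * M1))"
    by (simp add: mult.commute)
  show ?thesis unfolding v1eq using der nb by blast
qed


lemma sin_quad: fixes a b h :: real shows "\<bar>sin (a - (b + h)) - sin (a - (b + 0)) - h * (- cos (a - (b + 0)))\<bar> \<le> 1 * h^2"
proof (rule taylor_quad[where \<phi>="\<lambda>r. sin (a - (b + r))" and ?\<phi>1.0="\<lambda>r. - cos (a - (b + r))"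
      and ?\<phi>2.0="\<lambda>r. - sin (a - (b + r))"])
  fix r :: real
  show "((\<lambda>r. sin (a - (b + r))) has_real_derivative - cos (a - (b + r))) (at r)"
    by (auto intro!: derivative_eq_intros)
  show "((\<lambda>r. - cos (a - (b + r))) has_real_derivative - sin (a - (b + r))) (at r)"
    by (auto intro!: derivative_eq_intros)
  show "\<bar>- sin (a - (b + r))\<bar> \<le> 1" by simp
qed

lemma v2_deriv:
  fixes R :: "real \<Rightarrow> real^'d \<Rightarrow> real \<Rightarrow> real" and x :: "real^'d"
  assumes rho: "\<rho> > 0"
    and Rc: "continuous_on UNIV (\<lambda>z::(real^'d) \<times> real. R t (fst z) (snd z))"
    and b0: "\<And>y th'. y \<in> ball 0 \<rho> \<Longrightarrow> th' \<in> {0..2*pi} \<Longrightarrow> \<bar>R t (x + y) th'\<bar> \<le> M0"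
  shows "\<exists>D. ((\<lambda>s. v2 K \<rho> R t x (th + s)) has_real_derivative D) (at 0) \<and>
     \<bar>D\<bar> \<le> \<bar>K\<bar> * (2*pi * (measure lebesgue (ball (0::real^'d) \<rho>) * M0))"
proof -
  let ?\<mu> = "measure lebesgue (ball (0::real^'d) \<rho>)"
  have RC: "continuous_on A (\<lambda>z. R t (X z) (Y z))"
    if "continuous_on A X" "continuous_on A Y" for A and X :: "'z::metric_space \<Rightarrow> real^'d" and Y
    using continuous_on_compose2[OF Rc, of A "\<lambda>z. (X z, Y z)"] that
    by (simp add: continuous_on_Pair)
  define f where "f h th' = integral (ball 0 \<rho>) (\<lambda>y. (sin (th' - (th + h)) * R t (x + y) th') *\<^sub>R (1::real))" for h th'
  define G where "G th' = integral (ball 0 \<rho>) (\<lambda>y. (- cos (th' - (th + 0)) * R t (x + y) th') *\<^sub>R (1::real))" for th'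
  have v2eq: "v2 K \<rho> R t x (th + s) = K * integral {0..2*pi} (f s)" for s
    unfolding v2_def f_def by simp
  have fin: "(\<lambda>y. (sin (th' - (th + h)) * R t (x + y) th') *\<^sub>R (1::real)) integrable_on ball 0 \<rho>" for h th'
    by (intro int_ball_one continuous_intros RC; auto)
  have Gin: "(\<lambda>y. (- cos (th' - (th + 0)) * R t (x + y) th') *\<^sub>R (1::real)) integrable_on ball 0 \<rho>" for th'
    by (intro int_ball_one continuous_intros RC; auto)
  have fc: "continuous_on {0..2*pi} (f h)" for h
    unfolding f_def
    apply (rule cont_param[where k="\<lambda>_. 1::real"])
    subgoal by (simp only: split_def) (intro continuous_intros RC; auto)
    subgoal by (rule fin)
    subgoal by simp
    done
  have Gc: "continuous_on {0..2*pi} G"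
    unfolding G_def
    apply (rule cont_param[where k="\<lambda>_. 1::real"])
    subgoal by (simp only: split_def) (intro continuous_intros RC; auto)
    subgoal by (rule Gin)
    subgoal by simp
    done
  have der: "((\<lambda>s. integral {0..2*pi} (f s)) has_vector_derivative integral {0..2*pi} G) (at 0)"
  proof (rule param_deriv[where M="?\<mu> * M0"])
    show "{0..2*pi} \<in> lmeasurable" by simp
    show "f h integrable_on {0..2*pi}" for h by (rule integrable_continuous_interval[OF fc])
    show "G integrable_on {0..2*pi}" by (rule integrable_continuous_interval[OF Gc])
    fix h th' :: real assume h: "\<bar>h\<bar> \<le> 1" and th': "th' \<in> {0..2*pi}"
    let ?F1 = "\<lambda>y. (sin (th' - (th + h)) * R t (x + y) th') *\<^sub>R (1::real)"
    let ?F2 = "\<lambda>y. (sin (th' - (th + 0)) * R t (x + y) th') *\<^sub>R (1::real)"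
    let ?F3 = "\<lambda>y. (- cos (th' - (th + 0)) * R t (x + y) th') *\<^sub>R (1::real)"
    let ?H = "\<lambda>y. ((sin (th' - (th + h)) - sin (th' - (th + 0)) - h * (- cos (th' - (th + 0)))) * R t (x + y) th') *\<^sub>R (1::real)"
    have eq: "?H = (\<lambda>y. (?F1 y - ?F2 y) - h *\<^sub>R ?F3 y)"
      by (rule ext) (simp add: algebra_simps)
    have "f h th' - f 0 th' - h *\<^sub>R G th' = integral (ball 0 \<rho>) ?H"
    proof -
      have "integral (ball 0 \<rho>) (\<lambda>y. (?F1 y - ?F2 y) - h *\<^sub>R ?F3 y)
          = integral (ball 0 \<rho>) (\<lambda>y. ?F1 y - ?F2 y) - integral (ball 0 \<rho>) (\<lambda>y. h *\<^sub>R ?F3 y)"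
        by (rule integral_diff[OF integrable_diff[OF fin fin] integrable_cmul[OF Gin]])
      also have "\<dots> = integral (ball 0 \<rho>) ?F1 - integral (ball 0 \<rho>) ?F2 - h *\<^sub>R integral (ball 0 \<rho>) ?F3"
        by (simp only: integral_diff[OF fin fin] integral_cmul)
      finally show ?thesis unfolding eq f_def G_def by simp
    qed
    also have "norm \<dots> \<le> (h^2 * M0) * ?\<mu>"
    proof (rule int_bound)
      show "?H integrable_on ball 0 \<rho>"
        by (intro int_ball_one continuous_intros RC; auto)
      fix y :: "real^'d" assume y: "y \<in> ball 0 \<rho>"
      have "\<bar>(sin (th' - (th + h)) - sin (th' - (th + 0)) - h * (- cos (th' - (th + 0)))) * R t (x + y) th'\<bar> \<le> (1 * h^2) * M0"
        unfolding abs_mult by (intro mult_mono sin_quad b0 y th'; auto)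
      then show "norm (?H y) \<le> h^2 * M0" by simp
    qed simp
    finally show "norm (f h th' - f 0 th' - h *\<^sub>R G th') \<le> ?\<mu> * M0 * h^2"
      by (simp add: algebra_simps)
  qed
  have "norm (integral {0..2*pi} G) \<le> (?\<mu> * M0) * measure lebesgue {0..2*pi}"
  proof (rule int_bound)
    show "G integrable_on {0..2*pi}" by (rule integrable_continuous_interval[OF Gc])
    fix th' :: real assume th': "th' \<in> {0..2*pi}"
    have "norm (G th') \<le> M0 * ?\<mu>"
      unfolding G_def
    proof (rule int_bound[OF _ Gin])
      fix y :: "real^'d" assume y: "y \<in> ball 0 \<rho>"
      have "\<bar>- cos (th' - (th + 0))\<bar> * \<bar>R t (x + y) th'\<bar> \<le> 1 * M0"
        by (intro mult_mono b0 y th'; auto)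
      then show "norm ((- cos (th' - (th + 0)) * R t (x + y) th') *\<^sub>R (1::real)) \<le> M0"
        by (simp add: abs_mult)
    qed simp
    then show "norm (G th') \<le> ?\<mu> * M0" by (simp add: mult.commute)
  qed simp
  then have nb: "\<bar>integral {0..2*pi} G\<bar> \<le> 2*pi * (?\<mu> * M0)"
    by (simp add: mult.commute)
  have "((\<lambda>s. K * integral {0..2*pi} (f s)) has_real_derivative K * integral {0..2*pi} G) (at 0)"
    using der by (intro DERIV_cmult) (simp add: has_real_derivative_iff_has_vector_derivative)
  moreover have "\<bar>K * integral {0..2*pi} G\<bar> \<le> \<bar>K\<bar> * (2*pi * (?\<mu> * M0))"
    unfolding abs_mult by (rule mult_left_mono[OF nb abs_ge_zero])
  ultimately show ?thesis unfolding v2eq by blast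
qed

definition cell :: "real \<Rightarrow> (real^'d) set" where
  "cell L = {x. \<forall>i. 0 \<le> x$i \<and> x$i \<le> L}"

lemma cell_cbox: "cell L = cbox 0 (\<chi> i. L)"
  unfolding cell_def by (auto simp: mem_box_cart)

lemma compact_cell: "compact (cell L)"
  unfolding cell_cbox by (rule compact_cbox)

lemma shift_nat:
  fixes F :: "'a::real_vector \<Rightarrow> 'b"
  assumes P: "\<And>x. F (x + a) = F x"
  shows "F (x + of_nat n *\<^sub>R a) = F x"
proof (induction n arbitrary: x)
  case 0 then show ?case by simp
next
  case (Suc n)
  have eq: "x + of_nat (Suc n) *\<^sub>R a = (x + of_nat n *\<^sub>R a) + a" by (simp add: algebra_simps)
  show ?case by (simp only: eq P Suc.IH)
qed

lemma shift_int:
  fixes F :: "'a::real_vector \<Rightarrow> 'b"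
  assumes P: "\<And>x. F (x + a) = F x"
  shows "F (x + of_int k *\<^sub>R a) = F x"
proof (cases k rule: int_cases)
  case (nonneg n)
  then show ?thesis using shift_nat[of F a x n, OF P] by simp
next
  case (neg n)
  have "F ((x - of_nat (Suc n) *\<^sub>R a) + of_nat (Suc n) *\<^sub>R a) = F (x - of_nat (Suc n) *\<^sub>R a)"
    by (rule shift_nat[of F a, OF P])
  moreover have "x + of_int k *\<^sub>R a = x - of_nat (Suc n) *\<^sub>R a"
  proof -
    have kk: "(of_int k :: real) = - of_nat (Suc n)" using neg by simp
    show ?thesis by (simp only: kk scaleR_minus_left) simp
  qed
  ultimately show ?thesis by simp
qed

lemma shift_multi:
  fixes F :: "real^'d \<Rightarrow> 'b"
  assumes P: "\<And>x i. F (x + L *\<^sub>R axis i 1) = F x"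
  shows "finite I \<Longrightarrow> F (x + (\<Sum>i\<in>I. (of_int (k i) * L) *\<^sub>R axis i 1)) = F x"
proof (induction I arbitrary: x rule: finite_induct)
  case empty then show ?case by simp
next
  case (insert j I)
  have eq: "x + (\<Sum>i\<in>insert j I. (of_int (k i) * L) *\<^sub>R axis i 1)
      = (x + of_int (k j) *\<^sub>R (L *\<^sub>R axis j 1)) + (\<Sum>i\<in>I. (of_int (k i) * L) *\<^sub>R axis i 1)"
    using insert by (simp add: algebra_simps)
  have s2: "F (x + of_int (k j) *\<^sub>R (L *\<^sub>R axis j 1)) = F x"
    by (rule shift_int[of F "L *\<^sub>R axis j 1"]) (rule P)
  show ?case by (simp only: eq insert.IH s2)
qed

lemma mod_bounds:
  fixes a L :: real assumes L: "L > 0"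
  shows "0 \<le> a - L * of_int \<lfloor>a / L\<rfloor>" "a - L * of_int \<lfloor>a / L\<rfloor> \<le> L"
proof -
  show "0 \<le> a - L * of_int \<lfloor>a / L\<rfloor>" using floor_divide_lower[OF L, of a] by (simp add: mult.commute)
  show "a - L * of_int \<lfloor>a / L\<rfloor> \<le> L" using floor_divide_upper[OF L, of a] by (simp add: algebra_simps)
qed

lemma periodic_reduce:
  fixes F :: "real \<Rightarrow> real^'d \<Rightarrow> real \<Rightarrow> real"
  assumes L: "L > 0" and per: "periodic_field L F"
  shows "\<exists>x'\<in>cell L. \<exists>th'\<in>{0..2*pi}. F t x th = F t x' th'"
proof -
  have Px: "\<And>x i. F t (x + L *\<^sub>R axis i 1) th = F t x th" for th
    using per unfolding periodic_field_def by blast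
  have Pth: "\<And>th. F t x' (th + 2 * pi) = F t x' th" for x'
    using per unfolding periodic_field_def by blast
  define k where "k i = \<lfloor>x$i / L\<rfloor>" for i
  define x' where "x' = (\<chi> i. x$i - L * of_int (k i))"
  have x'c: "x' \<in> cell L" unfolding cell_def x'_def k_def using mod_bounds[OF L] by simp
  have xeq: "x = x' + (\<Sum>i\<in>UNIV. (of_int (k i) * L) *\<^sub>R axis i 1)"
    unfolding vec_eq_iff x'_def by (simp add: axis_def if_distrib[of "\<lambda>u. _ * u"] cong: if_cong)
  have "F t x th = F t x' th"
    using shift_multi[of "\<lambda>y. F t y th" L UNIV x' k] Px xeq by simp
  define m where "m = \<lfloor>th / (2*pi)\<rfloor>"
  define th' where "th' = th - 2*pi * of_int m"
  have th'c: "th' \<in> {0..2*pi}" unfolding th'_def m_def using mod_bounds[of "2*pi" th] by simp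
  have "F t x' (th' + of_int m *\<^sub>R (2*pi)) = F t x' th'"
    by (rule shift_int[of "F t x'" "2*pi", OF Pth])
  then have "F t x' th = F t x' th'" unfolding th'_def by (simp add: algebra_simps)
  then show ?thesis using x'c th'c \<open>F t x th = F t x' th\<close> by (intro bexI[of _ x'] bexI[of _ th']) auto
qed

lemma bl1: "norm w = 1 \<Longrightarrow> \<bar>blinfun_apply F w\<bar> \<le> norm F"
  using norm_blinfun[of F w] by simp

lemma bl2: "norm w = 1 \<Longrightarrow> \<bar>blinfun_apply (blinfun_apply F w) w\<bar> \<le> norm F"
proof -
  assume w: "norm w = 1"
  have "\<bar>blinfun_apply (blinfun_apply F w) w\<bar> \<le> norm (blinfun_apply F w)" using bl1[OF w] .
  also have "\<dots> \<le> norm F" using norm_blinfun[of F w] w by simp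
  finally show ?thesis .
qed

lemma norm_w: "norm ((0::real), axis i (1::real), (0::real)) = 1" "norm ((0::real), (0::real^'d), (1::real)) = 1"
  by (simp_all add: norm_Pair)

lemma cont_apply: "continuous_on A F \<Longrightarrow> continuous_on A (\<lambda>z. blinfun_apply (F z) w)"
  by (intro continuous_intros) auto


context
  fixes R :: "real \<Rightarrow> real^'d \<Rightarrow> real \<Rightarrow> real"
    and f1 :: "real \<times> (real^'d) \<times> real \<Rightarrow> (real \<times> (real^'d) \<times> real) \<Rightarrow>\<^sub>L real"
    and f2 :: "real \<times> (real^'d) \<times> real \<Rightarrow> (real \<times> (real^'d) \<times> real) \<Rightarrow>\<^sub>L ((real \<times> (real^'d) \<times> real) \<Rightarrow>\<^sub>L real)"
    and T :: real
  assumes dR: "\<And>p. fst p \<in> {0<..<T} \<Longrightarrow> (uncurry3 R has_derivative blinfun_apply (f1 p)) (at p)"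
    and dF1: "\<And>p. fst p \<in> {0<..<T} \<Longrightarrow> (f1 has_derivative blinfun_apply (f2 p)) (at p)"
begin

lemma line_x:
  assumes "0 < t" "t < T"
  shows "((\<lambda>r. R t (x + r *\<^sub>R v) th) has_real_derivative f1 (t, x + r *\<^sub>R v, th) (0, v, 0)) (at r)"
proof -
  have e: "(t, x, th) + r *\<^sub>R (0, v, 0) = (t, x + r *\<^sub>R v, th)" for r by simp
  have "((\<lambda>r. uncurry3 R ((t, x, th) + r *\<^sub>R (0, v, 0))) has_real_derivative
      f1 ((t, x, th) + r *\<^sub>R (0, v, 0)) (0, v, 0)) (at r)"
    by (rule line_d1) (rule dR, use assms in simp)
  then show ?thesis unfolding e by (simp add: uncurry3_def)
qed

lemma line_x2:
  assumes "0 < t" "t < T"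
  shows "((\<lambda>r. f1 (t, x + r *\<^sub>R v, th) u) has_real_derivative f2 (t, x + r *\<^sub>R v, th) (0, v, 0) u) (at r)"
proof -
  have e: "(t, x, th) + r *\<^sub>R (0, v, 0) = (t, x + r *\<^sub>R v, th)" for r by simp
  have "((\<lambda>r. f1 ((t, x, th) + r *\<^sub>R (0, v, 0)) u) has_real_derivative
      f2 ((t, x, th) + r *\<^sub>R (0, v, 0)) (0, v, 0) u) (at r)"
    by (rule line_d2) (rule dF1, use assms in simp)
  then show ?thesis unfolding e .
qed

lemma line_th:
  assumes "0 < t" "t < T"
  shows "((\<lambda>s. R t x s) has_real_derivative f1 (t, x, s) (0, 0, 1)) (at s)"
proof -
  have e: "(t, x, 0) + s *\<^sub>R (0, 0, 1) = (t, x, s)" for s by simp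
  have "((\<lambda>s. uncurry3 R ((t, x, 0) + s *\<^sub>R (0, 0, 1))) has_real_derivative
      f1 ((t, x, 0) + s *\<^sub>R (0, 0, 1)) (0, 0, 1)) (at s)"
    by (rule line_d1) (rule dR, use assms in simp)
  then show ?thesis unfolding e by (simp add: uncurry3_def)
qed

lemma line_th2:
  assumes "0 < t" "t < T"
  shows "((\<lambda>s. f1 (t, x, s) u) has_real_derivative f2 (t, x, s) (0, 0, 1) u) (at s)"
proof -
  have e: "(t, x, 0) + s *\<^sub>R (0, 0, 1) = (t, x, s)" for s by simp
  have "((\<lambda>s. f1 ((t, x, 0) + s *\<^sub>R (0, 0, 1)) u) has_real_derivative
      f2 ((t, x, 0) + s *\<^sub>R (0, 0, 1)) (0, 0, 1) u) (at s)"
    by (rule line_d2) (rule dF1, use assms in simp)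
  then show ?thesis unfolding e .
qed

lemma line_t:
  assumes "0 < s" "s < T"
  shows "((\<lambda>s. R s x th) has_real_derivative f1 (s, x, th) (1, 0, 0)) (at s)"
proof -
  have e: "(0, x, th) + s *\<^sub>R (1, 0, 0) = (s, x, th)" for s by simp
  have "((\<lambda>s. uncurry3 R ((0, x, th) + s *\<^sub>R (1, 0, 0))) has_real_derivative
      f1 ((0, x, th) + s *\<^sub>R (1, 0, 0)) (1, 0, 0)) (at s)"
    by (rule line_d1) (rule dR, use assms in simp)
  then show ?thesis unfolding e by (simp add: uncurry3_def)
qed

lemma px: "0 < t \<Longrightarrow> t < T \<Longrightarrow> partial_x i R t x th = f1 (t, x, th) (0, axis i 1, 0)"
  unfolding partial_x_def using line_x[of t x "axis i 1" th 0] by (simp add: DERIV_imp_deriv)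

lemma pxx: "0 < t \<Longrightarrow> t < T \<Longrightarrow> partial_x i (partial_x i R) t x th = f2 (t, x, th) (0, axis i 1, 0) (0, axis i 1, 0)"
  unfolding partial_x_def[of i "partial_x i R"] px
  using line_x2[of t x "axis i 1" th "(0, axis i 1, 0)" 0] by (simp add: px DERIV_imp_deriv)

lemma pth: "0 < t \<Longrightarrow> t < T \<Longrightarrow> partial_th R t x th = f1 (t, x, th) (0, 0, 1)"
  unfolding partial_th_def using line_th[of t x th] by (simp add: DERIV_imp_deriv)

lemma pthth:
  assumes "0 < t" "t < T"
  shows "partial_th (partial_th R) t x th = f2 (t, x, th) (0, 0, 1) (0, 0, 1)"
proof -
  have e: "partial_th R t x = (\<lambda>s. f1 (t, x, s) (0, 0, 1))"
    by (rule ext) (rule pth[OF assms])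
  show ?thesis unfolding partial_th_def[of "partial_th R"] e
    using line_th2[OF assms, of x "(0, 0, 1)" th] by (simp add: DERIV_imp_deriv)
qed

lemma pt: "0 < t \<Longrightarrow> t < T \<Longrightarrow> partial_t R t x th = f1 (t, x, th) (1, 0, 0)"
  unfolding partial_t_def using line_t[of t x th] by (simp add: DERIV_imp_deriv)


lemma key:
  fixes x :: "real^'d" and th :: real and Dx Dth J0 J K \<rho> M0 M1 M2 :: real
  assumes t: "0 < t" "t < T" and rho: "\<rho> > 0" and Dx: "Dx \<ge> 0" and Dth: "Dth \<ge> 0"
    and Rc: "continuous_on UNIV (\<lambda>z::(real^'d) \<times> real. R t (fst z) (snd z))"
    and F1c: "continuous_on UNIV (\<lambda>z::(real^'d) \<times> real. f1 (t, fst z, snd z))"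
    and b0: "\<And>y th'. y \<in> ball 0 \<rho> \<Longrightarrow> th' \<in> {0..2*pi} \<Longrightarrow> \<bar>R t (x + y) th'\<bar> \<le> M0"
    and b1: "\<And>y th'. y \<in> ball 0 \<rho> \<Longrightarrow> th' \<in> {0..2*pi} \<Longrightarrow> norm (f1 (t, x + y, th')) \<le> M1"
    and b2: "\<And>y th' r i. y \<in> ball 0 \<rho> \<Longrightarrow> th' \<in> {0..2*pi} \<Longrightarrow> \<bar>r\<bar> \<le> 1 \<Longrightarrow>
        norm (f2 (t, x + y + r *\<^sub>R axis i 1, th')) \<le> M2"
    and pde: "partial_t R t x th =
        Dx * laplace_x R t x th
        - div_x (\<lambda>s y a. R s y a *\<^sub>R v1 J0 J \<rho> R s y a) t x th
        + Dth * partial_th (partial_th R) t x th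
        - partial_th (\<lambda>s y a. v2 K \<rho> R s y a * R s y a) t x th"
    and mn: "\<And>x' th'. R t x th \<le> R t x' th'"
    and neg: "R t x th \<le> 0"
  shows "partial_t R t x th \<ge>
     (of_nat CARD('d) * (2*pi * (measure lebesgue (ball (0::real^'d) \<rho>) * ((\<bar>J0\<bar>+\<bar>J\<bar>) * M1)))
      + \<bar>K\<bar> * (2*pi * (measure lebesgue (ball (0::real^'d) \<rho>) * M0))) * R t x th"
proof -
  let ?\<mu> = "measure lebesgue (ball (0::real^'d) \<rho>)"
  let ?B1 = "2*pi * (?\<mu> * ((\<bar>J0\<bar>+\<bar>J\<bar>) * M1))"
  let ?B2 = "\<bar>K\<bar> * (2*pi * (?\<mu> * M0))"
  let ?w = "\<lambda>i. ((0::real), axis i (1::real), (0::real))"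
  let ?wt = "((0::real), (0::real^'d), (1::real))"
  let ?Rp = "R t x th"
  have minx: "f1 (t, x, th) (?w i) = 0 \<and> f2 (t, x, th) (?w i) (?w i) \<ge> 0" for i
  proof -
    have A: "\<And>r. ((\<lambda>r. R t (x + r *\<^sub>R axis i 1) th) has_real_derivative f1 (t, x + r *\<^sub>R axis i 1, th) (?w i)) (at r)"
      by (rule line_x[OF t])
    have B: "((\<lambda>r. f1 (t, x + r *\<^sub>R axis i 1, th) (?w i)) has_real_derivative f2 (t, x, th) (?w i) (?w i)) (at 0)"
      using line_x2[OF t, of x "axis i 1" th "?w i" 0] by simp
    have C: "\<And>r. R t (x + 0 *\<^sub>R axis i 1) th \<le> R t (x + r *\<^sub>R axis i 1) th" using mn by simp
    show ?thesis using min2[OF A B C] by simp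
  qed
  have minth: "f1 (t, x, th) ?wt = 0 \<and> f2 (t, x, th) ?wt ?wt \<ge> 0"
  proof -
    have A: "\<And>r. ((\<lambda>s. R t x s) has_real_derivative f1 (t, x, r) ?wt) (at r)"
      by (rule line_th[OF t])
    have B: "((\<lambda>s. f1 (t, x, s) ?wt) has_real_derivative f2 (t, x, th) ?wt ?wt) (at th)"
      by (rule line_th2[OF t])
    have C: "\<And>r. R t x th \<le> R t x r" using mn by simp
    show ?thesis using min2[OF A B C] by simp
  qed
  have "\<exists>D. ((\<lambda>s. v1 J0 J \<rho> R t (x + s *\<^sub>R axis i 1) th) has_vector_derivative D) (at 0) \<and> norm D \<le> ?B1" for i
  proof (rule v1_deriv[where R=R and t=t and Rx="\<lambda>z th'. f1 (t, z, th') (?w i)", OF rho Rc])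
    show "continuous_on UNIV (\<lambda>z::(real^'d) \<times> real. f1 (t, fst z, snd z) (?w i))"
      by (rule cont_apply[OF F1c])
    fix y :: "real^'d" and th' :: real assume y: "y \<in> ball 0 \<rho>" and th': "th' \<in> {0..2*pi}"
    show "\<bar>f1 (t, x + y, th') (?w i)\<bar> \<le> M1"
      using bl1[OF norm_w(1), of "f1 (t, x + y, th')" i] b1[OF y th'] by linarith
    fix h :: real assume h: "\<bar>h\<bar> \<le> 1"
    have "\<bar>R t (x + y + h *\<^sub>R axis i 1) th' - R t (x + y + 0 *\<^sub>R axis i 1) th' - h * f1 (t, x + y + 0 *\<^sub>R axis i 1, th') (?w i)\<bar> \<le> M2 * h^2"
    proof (rule taylor_quad[where \<phi>="\<lambda>r. R t (x + y + r *\<^sub>R axis i 1) th'"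
          and ?\<phi>1.0="\<lambda>r. f1 (t, x + y + r *\<^sub>R axis i 1, th') (?w i)"
          and ?\<phi>2.0="\<lambda>r. f2 (t, x + y + r *\<^sub>R axis i 1, th') (?w i) (?w i)"])
      fix r :: real assume r: "\<bar>r\<bar> \<le> \<bar>h\<bar>"
      show "((\<lambda>r. R t (x + y + r *\<^sub>R axis i 1) th') has_real_derivative f1 (t, x + y + r *\<^sub>R axis i 1, th') (?w i)) (at r)"
        by (rule line_x[OF t])
      show "((\<lambda>r. f1 (t, x + y + r *\<^sub>R axis i 1, th') (?w i)) has_real_derivative f2 (t, x + y + r *\<^sub>R axis i 1, th') (?w i) (?w i)) (at r)"
        by (rule line_x2[OF t])
      show "\<bar>f2 (t, x + y + r *\<^sub>R axis i 1, th') (?w i) (?w i)\<bar> \<le> M2"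
        using bl2[OF norm_w(1), of "f2 (t, x + y + r *\<^sub>R axis i 1, th')" i] b2[OF y th', of r i] r h by simp
    qed
    then show "\<bar>R t (x + h *\<^sub>R axis i 1 + y) th' - R t (x + y) th' - h * f1 (t, x + y, th') (?w i)\<bar> \<le> M2 * h^2"
      by (simp add: add_ac)
  qed
  then obtain Dv where Dv: "\<And>i. ((\<lambda>s. v1 J0 J \<rho> R t (x + s *\<^sub>R axis i 1) th) has_vector_derivative Dv i) (at 0)"
    and Dvb: "\<And>i. norm (Dv i) \<le> ?B1"
    by metis
  have dvi: "((\<lambda>s. v1 J0 J \<rho> R t (x + s *\<^sub>R axis i 1) th $ i) has_real_derivative Dv i $ i) (at 0)" for i
  proof -
    have "((\<lambda>s. v1 J0 J \<rho> R t (x + s *\<^sub>R axis i 1) th $ i) has_derivative (\<lambda>h. (h *\<^sub>R Dv i) $ i)) (at 0)"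
      using bounded_linear.has_derivative[OF bounded_linear_vec_nth Dv[of i, unfolded has_vector_derivative_def]] .
    then show ?thesis by (rule has_derivative_imp_has_field_derivative) simp
  qed
  have divterm: "div_x (\<lambda>s y a. R s y a *\<^sub>R v1 J0 J \<rho> R s y a) t x th = (\<Sum>i\<in>UNIV. Dv i $ i * ?Rp)"
    unfolding div_x_def
  proof (rule sum.cong[OF refl])
    fix i :: 'd
    have A: "((\<lambda>r. R t (x + r *\<^sub>R axis i 1) th) has_real_derivative 0) (at 0)"
      using line_x[OF t, of x "axis i 1" th 0] minx[of i] by simp
    have "((\<lambda>r. R t (x + r *\<^sub>R axis i 1) th * v1 J0 J \<rho> R t (x + r *\<^sub>R axis i 1) th $ i)
        has_real_derivative Dv i $ i * ?Rp) (at 0)"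
      using DERIV_mult[OF A dvi[of i]] by simp
    then show "partial_x i (\<lambda>s y a. (R s y a *\<^sub>R v1 J0 J \<rho> R s y a) $ i) t x th = Dv i $ i * ?Rp"
      unfolding partial_x_def by (simp add: DERIV_imp_deriv)
  qed
  obtain D2 where D2: "((\<lambda>s. v2 K \<rho> R t x (th + s)) has_real_derivative D2) (at 0)" and D2b: "\<bar>D2\<bar> \<le> ?B2"
    using v2_deriv[where R=R and t=t, OF rho Rc b0] by blast
  have D2': "((\<lambda>a. v2 K \<rho> R t x a) has_real_derivative D2) (at th)"
    using D2 DERIV_shift[of "\<lambda>a. v2 K \<rho> R t x a" D2 0 th] by (simp add: add.commute)
  have v2term: "partial_th (\<lambda>s y a. v2 K \<rho> R s y a * R s y a) t x th = D2 * ?Rp"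
  proof -
    have A: "((\<lambda>s. R t x s) has_real_derivative 0) (at th)"
      using line_th[OF t, of x th] minth by simp
    have "((\<lambda>a. v2 K \<rho> R t x a * R t x a) has_real_derivative D2 * ?Rp) (at th)"
      using DERIV_mult[OF D2' A] by simp
    then show ?thesis unfolding partial_th_def by (simp add: DERIV_imp_deriv)
  qed
  have lap: "laplace_x R t x th \<ge> 0"
    unfolding laplace_x_def using minx by (simp add: pxx[OF t] sum_nonneg)
  have thth: "partial_th (partial_th R) t x th \<ge> 0"
    using minth by (simp add: pthth[OF t])
  define s where "s = (\<Sum>i\<in>UNIV. Dv i $ i) + D2"
  have sb: "\<bar>s\<bar> \<le> of_nat CARD('d) * ?B1 + ?B2"
  proof -
    have "\<bar>\<Sum>i\<in>UNIV. Dv i $ i\<bar> \<le> (\<Sum>i\<in>(UNIV::'d set). ?B1)"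
      by (rule order_trans[OF sum_abs sum_mono]) (rule order_trans[OF component_le_norm_cart Dvb])
    then show ?thesis unfolding s_def using D2b by simp
  qed
  have pt_ge: "partial_t R t x th \<ge> - (s * ?Rp)"
  proof -
    have "partial_t R t x th = Dx * laplace_x R t x th + Dth * partial_th (partial_th R) t x th - s * ?Rp"
    proof -
      have "(\<Sum>i\<in>UNIV. Dv i $ i * ?Rp) = (\<Sum>i\<in>UNIV. Dv i $ i) * ?Rp" by (simp add: sum_distrib_right)
      then show ?thesis unfolding pde divterm v2term s_def by (simp add: algebra_simps)
    qed
    moreover have "Dx * laplace_x R t x th \<ge> 0" using Dx lap by simp
    moreover have "Dth * partial_th (partial_th R) t x th \<ge> 0" using Dth thth by simp
    ultimately show ?thesis by linarith
  qed
  have "(of_nat CARD('d) * ?B1 + ?B2) * ?Rp = (-(of_nat CARD('d) * ?B1 + ?B2)) * (- ?Rp)" by (simp only: mult_minus_left mult_minus_right minus_minus)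
  also have "\<dots> \<le> (- \<bar>s\<bar>) * (- ?Rp)" using sb neg by (intro mult_right_mono) auto
  also have "\<dots> \<le> s * (- ?Rp)" using neg by (intro mult_right_mono) auto
  also have "\<dots> = - (s * ?Rp)" by simp
  finally show ?thesis using pt_ge by linarith
qed

end

lemma bound_compact:
  fixes g :: "'a::metric_space \<Rightarrow> 'b::real_normed_vector"
  assumes "continuous_on S g" "compact K" "K \<subseteq> S"
  shows "\<exists>M. \<forall>p\<in>K. norm (g p) \<le> M"
proof -
  have "compact (g ` K)" by (rule compact_continuous_image[OF continuous_on_subset[OF assms(1,3)] assms(2)])
  then have "bounded (g ` K)" by (rule compact_imp_bounded)
  then obtain M where "\<forall>z\<in>g ` K. norm z \<le> M" unfolding bounded_iff by blast
  then show ?thesis by blast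
qed

lemma slice_cont:
  fixes G :: "real \<times> (real^'d) \<times> real \<Rightarrow> 'b::topological_space"
  assumes "continuous_on ({0..<T} \<times> UNIV \<times> UNIV) G" "0 \<le> t" "t < T"
  shows "continuous_on UNIV (\<lambda>z::(real^'d) \<times> real. G (t, fst z, snd z))"
proof -
  have "continuous_on UNIV (\<lambda>z::(real^'d) \<times> real. (t, fst z, snd z))"
    by (intro continuous_intros)
  then show ?thesis
    by (rule continuous_on_compose2[OF assms(1)]) (use assms in auto)
qed


lemma core:
  fixes R :: "real \<Rightarrow> real^'d \<Rightarrow> real \<Rightarrow> real"
    and f1 :: "real \<times> (real^'d) \<times> real \<Rightarrow> (real \<times> (real^'d) \<times> real) \<Rightarrow>\<^sub>L real"
    and f2 :: "real \<times> (real^'d) \<times> real \<Rightarrow> (real \<times> (real^'d) \<times> real) \<Rightarrow>\<^sub>L ((real \<times> (real^'d) \<times> real) \<Rightarrow>\<^sub>L real)"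
    and L \<rho> Dx Dth J0 J K T T' :: real
  assumes L: "L > 0" and rho: "\<rho> > 0" and Dx: "Dx > 0" and Dth: "Dth \<ge> 0"
    and periodic: "periodic_field L R"
    and pde: "\<And>t x th. 0 < t \<Longrightarrow> t < T \<Longrightarrow>
      partial_t R t x th =
        Dx * laplace_x R t x th
        - div_x (\<lambda>s y a. R s y a *\<^sub>R v1 J0 J \<rho> R s y a) t x th
        + Dth * partial_th (partial_th R) t x th
        - partial_th (\<lambda>s y a. v2 K \<rho> R s y a * R s y a) t x th"
    and init0: "\<And>x th. R 0 x th \<ge> 0"
    and dR: "\<And>p. fst p \<in> {0<..<T} \<Longrightarrow> (uncurry3 R has_derivative blinfun_apply (f1 p)) (at p)"
    and dF1: "\<And>p. fst p \<in> {0<..<T} \<Longrightarrow> (f1 has_derivative blinfun_apply (f2 p)) (at p)"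
    and cR: "continuous_on ({0..<T} \<times> UNIV \<times> UNIV) (uncurry3 R)"
    and cF1: "continuous_on ({0..<T} \<times> UNIV \<times> UNIV) f1"
    and cF2: "continuous_on ({0..<T} \<times> UNIV \<times> UNIV) f2"
    and T': "0 < T'" "T' < T"
  shows "\<forall>t\<in>{0..T'}. \<forall>x th. 0 \<le> R t x th"
proof -
  let ?S = "{0..<T} \<times> (UNIV::(real^'d) set) \<times> (UNIV::real set)"
  let ?\<mu> = "measure lebesgue (ball (0::real^'d) \<rho>)"
  have "bounded (cell L :: (real^'d) set)" by (rule compact_imp_bounded[OF compact_cell])
  then obtain Rb where Rb: "\<And>x::real^'d. x \<in> cell L \<Longrightarrow> norm x \<le> Rb"
    unfolding bounded_iff by blast
  define Kc where "Kc = {0..T'} \<times> cball (0::real^'d) (Rb + \<rho> + 1) \<times> {0..2*pi}"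
  have Kcc: "compact Kc" unfolding Kc_def by (intro compact_Times compact_Icc compact_cball)
  have KcS: "Kc \<subseteq> ?S" unfolding Kc_def using T' by auto
  obtain M0 where M0: "\<And>p. p \<in> Kc \<Longrightarrow> norm (uncurry3 R p) \<le> M0"
    using bound_compact[OF cR Kcc KcS] by blast
  obtain M1 where M1: "\<And>p. p \<in> Kc \<Longrightarrow> norm (f1 p) \<le> M1"
    using bound_compact[OF cF1 Kcc KcS] by blast
  obtain M2 where M2: "\<And>p. p \<in> Kc \<Longrightarrow> norm (f2 p) \<le> M2"
    using bound_compact[OF cF2 Kcc KcS] by blast
  define Cb where "Cb = of_nat CARD('d) * (2*pi * (?\<mu> * ((\<bar>J0\<bar>+\<bar>J\<bar>) * M1))) + \<bar>K\<bar> * (2*pi * (?\<mu> * M0))"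
  define lam where "lam = Cb + 1"
  define Kz where "Kz = {0..T'} \<times> (cell L :: (real^'d) set) \<times> {0..2*pi}"
  have Kzc: "compact Kz" unfolding Kz_def by (intro compact_Times compact_Icc compact_cell)
  have KzS: "Kz \<subseteq> ?S" unfolding Kz_def using T' by auto
  have main: "R t x th + \<epsilon> * exp (lam * t) > 0" if eps: "\<epsilon> > 0" and t: "t \<in> {0..T'}" for \<epsilon> t x th
  proof (rule ccontr)
    assume bad: "\<not> R t x th + \<epsilon> * exp (lam * t) > 0"
    define g where "g p = uncurry3 R p + \<epsilon> * exp (lam * fst p)" for p :: "real \<times> (real^'d) \<times> real"
    have gc: "continuous_on ?S g" unfolding g_def by (intro continuous_intros cR)
    define A where "A = Kz \<inter> g -` {..0}"
    have Acl: "closed A" unfolding A_def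
      by (rule continuous_closed_preimage[OF continuous_on_subset[OF gc KzS] compact_imp_closed[OF Kzc]]) simp
    have Ac: "compact A" using compact_Int_closed[OF Kzc Acl] by (simp add: A_def Int_absorb1)
    have Zc: "compact (fst ` A)" by (rule compact_continuous_image[OF continuous_on_fst[OF continuous_on_id] Ac])
    obtain x0 th0 where x0: "x0 \<in> cell L" "th0 \<in> {0..2*pi}" and eq0: "R t x th = R t x0 th0"
      using periodic_reduce[OF L periodic] by blast
    have "(t, x0, th0) \<in> A" using x0 t bad eq0 unfolding A_def Kz_def g_def by (simp add: uncurry3_def)
    then have Zne: "fst ` A \<noteq> {}" by blast
    obtain ts where tsZ: "ts \<in> fst ` A" and tsmin: "\<And>s. s \<in> fst ` A \<Longrightarrow> ts \<le> s"
      using compact_attains_inf[OF Zc Zne] by blast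
    obtain xs ths where psA: "(ts, xs, ths) \<in> A" using tsZ by force
    have xs: "xs \<in> cell L" and ths: "ths \<in> {0..2*pi}" and ts: "ts \<in> {0..T'}"
      and gs: "R ts xs ths + \<epsilon> * exp (lam * ts) \<le> 0"
      using psA unfolding A_def Kz_def g_def by (auto simp: uncurry3_def)
    have before: "R s x' th' + \<epsilon> * exp (lam * s) > 0"
      if "0 \<le> s" "s < ts" "x' \<in> cell L" "th' \<in> {0..2*pi}" for s x' th'
    proof (rule ccontr)
      assume "\<not> R s x' th' + \<epsilon> * exp (lam * s) > 0"
      then have "(s, x', th') \<in> A" using that ts unfolding A_def Kz_def g_def by (auto simp: uncurry3_def)
      then have "ts \<le> s" using tsmin by force
      then show False using that by simp
    qed
    have ts0: "0 < ts"
    proof (rule ccontr)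
      assume "\<not> 0 < ts"
      then have "ts = 0" using ts by simp
      then show False using gs init0[of xs ths] eps by (simp add: add_nonneg_pos)
    qed
    have tsT: "ts < T" using ts T' by simp
    have dpsi: "((\<lambda>s. R s x' th' + \<epsilon> * exp (lam * s)) has_real_derivative
        f1 (ts, x', th') (1, 0, 0) + \<epsilon> * (exp (lam * ts) * lam)) (at ts)" for x' th'
    proof -
      have A: "((\<lambda>s. R s x' th') has_real_derivative f1 (ts, x', th') (1, 0, 0)) (at ts)"
        by (rule line_t[where R=R and ?f1.0=f1 and ?f2.0=f2 and T=T, OF dR dF1 ts0 tsT])
      have B: "((\<lambda>s. \<epsilon> * exp (lam * s)) has_real_derivative \<epsilon> * (exp (lam * ts) * lam)) (at ts)"
        by (auto intro!: derivative_eq_intros)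
      show ?thesis using DERIV_add[OF A B] .
    qed
    have atts: "R ts x' th' + \<epsilon> * exp (lam * ts) \<ge> 0" if "x' \<in> cell L" "th' \<in> {0..2*pi}" for x' th'
    proof (rule ccontr)
      let ?psi = "\<lambda>s. R s x' th' + \<epsilon> * exp (lam * s)"
      assume "\<not> ?psi ts \<ge> 0"
      then have neg: "?psi ts < 0" by simp
      have "?psi \<midarrow>ts\<rightarrow> ?psi ts"
        using DERIV_continuous[OF dpsi[of x' th']] by (simp add: isCont_def continuous_at)
      then obtain r where r: "0 < r" and rr: "\<And>s. s \<noteq> ts \<Longrightarrow> \<bar>ts - s\<bar> < r \<Longrightarrow> ?psi s < 0"
        using LIM_fun_less_zero[OF _ neg] by blast
      define s where "s = max 0 (ts - r/2)"
      have s: "0 \<le> s" "s < ts" "\<bar>ts - s\<bar> < r" using r ts0 by (auto simp: s_def)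
      have "?psi s < 0" using rr[of s] s by simp
      moreover have "?psi s > 0" using before[OF s(1,2) that] .
      ultimately show False by simp
    qed
    have geq: "R ts xs ths = - (\<epsilon> * exp (lam * ts))" using atts[OF xs ths] gs by simp
    have mn: "R ts xs ths \<le> R ts x' th'" for x' th'
    proof -
      obtain x1 th1 where x1: "x1 \<in> cell L" "th1 \<in> {0..2*pi}" and e1: "R ts x' th' = R ts x1 th1"
        using periodic_reduce[OF L periodic] by blast
      show ?thesis using atts[OF x1] geq e1 by simp
    qed
    have negp: "R ts xs ths \<le> 0" using geq eps by simp
    have dle: "f1 (ts, xs, ths) (1, 0, 0) + \<epsilon> * (exp (lam * ts) * lam) \<le> 0"
    proof (rule ccontr)
      let ?psi = "\<lambda>s. R s xs ths + \<epsilon> * exp (lam * s)"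
      assume "\<not> ?thesis"
      then obtain d where d: "d > 0" and dd: "\<And>h. h > 0 \<Longrightarrow> h < d \<Longrightarrow> ?psi (ts - h) < ?psi ts"
        using DERIV_pos_inc_left[OF dpsi[of xs ths]] by auto
      define h where "h = min (d/2) ts"
      have h: "h > 0" "h < d" "h \<le> ts" using d ts0 by (auto simp: h_def)
      have "?psi (ts - h) < 0" using dd[OF h(1,2)] geq by simp
      moreover have "?psi (ts - h) > 0" using before[of "ts - h" xs ths] h xs ths by simp
      ultimately show False by simp
    qed
    have inKc: "(ts, xs + y + r *\<^sub>R axis i 1, th') \<in> Kc"
      if "y \<in> ball 0 \<rho>" "th' \<in> {0..2*pi}" "\<bar>r\<bar> \<le> 1" for y th' r i
    proof -
      have "norm (xs + y + r *\<^sub>R axis i 1) \<le> norm xs + norm y + norm (r *\<^sub>R axis i (1::real))"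
        by (rule order_trans[OF norm_triangle_ineq add_right_mono[OF norm_triangle_ineq]])
      also have "\<dots> \<le> Rb + \<rho> + 1" using Rb[OF xs] that by (auto simp: dist_norm)
      finally show ?thesis using that ts unfolding Kc_def by auto
    qed
    have inKc0: "(ts, xs + y, th') \<in> Kc" if "y \<in> ball 0 \<rho>" "th' \<in> {0..2*pi}" for y th'
      using inKc[OF that, of 0 undefined] by simp
    have "partial_t R ts xs ths \<ge> Cb * R ts xs ths"
      unfolding Cb_def
    proof (rule key[OF dR dF1 ts0 tsT rho less_imp_le[OF Dx] Dth])
      show "continuous_on UNIV (\<lambda>z::(real^'d) \<times> real. R ts (fst z) (snd z))"
        using slice_cont[OF cR, of ts] ts0 tsT by (simp add: uncurry3_def)
      show "continuous_on UNIV (\<lambda>z::(real^'d) \<times> real. f1 (ts, fst z, snd z))"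
        using slice_cont[OF cF1, of ts] ts0 tsT by simp
      show "\<bar>R ts (xs + y) th'\<bar> \<le> M0" if "y \<in> ball 0 \<rho>" "th' \<in> {0..2*pi}" for y th'
        using M0[OF inKc0[OF that]] by (simp add: uncurry3_def)
      show "norm (f1 (ts, xs + y, th')) \<le> M1" if "y \<in> ball 0 \<rho>" "th' \<in> {0..2*pi}" for y th'
        using M1[OF inKc0[OF that]] .
      show "norm (f2 (ts, xs + y + r *\<^sub>R axis i 1, th')) \<le> M2"
        if "y \<in> ball 0 \<rho>" "th' \<in> {0..2*pi}" "\<bar>r\<bar> \<le> 1" for y th' r i
        using M2[OF inKc[OF that]] .
      show "partial_t R ts xs ths =
        Dx * laplace_x R ts xs ths
        - div_x (\<lambda>s y a. R s y a *\<^sub>R v1 J0 J \<rho> R s y a) ts xs ths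
        + Dth * partial_th (partial_th R) ts xs ths
        - partial_th (\<lambda>s y a. v2 K \<rho> R s y a * R s y a) ts xs ths"
        by (rule pde[OF ts0 tsT])
      show "R ts xs ths \<le> R ts x' th'" for x' th' by (rule mn)
      show "R ts xs ths \<le> 0" by (rule negp)
    qed
    then have "f1 (ts, xs, ths) (1, 0, 0) \<ge> Cb * R ts xs ths"
      using pt[OF dR dF1 ts0 tsT] by simp
    then have "Cb * (- (\<epsilon> * exp (lam * ts))) + \<epsilon> * (exp (lam * ts) * lam) \<le> 0"
      using dle geq by simp
    then have "(\<epsilon> * exp (lam * ts)) * (lam - Cb) \<le> 0" by (simp add: algebra_simps)
    moreover have "(\<epsilon> * exp (lam * ts)) * (lam - Cb) > 0" using eps by (simp add: lam_def)
    ultimately show False by simp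
  qed
  show ?thesis
  proof (intro ballI allI)
    fix t x th assume t: "t \<in> {0..T'}"
    show "0 \<le> R t x th"
    proof (rule ccontr)
      assume "\<not> 0 \<le> R t x th"
      then have n: "R t x th < 0" by simp
      define \<epsilon> where "\<epsilon> = - R t x th / (2 * exp (lam * t))"
      have e: "\<epsilon> > 0" unfolding \<epsilon>_def using n by (intro divide_pos_pos) auto
      have "\<epsilon> * exp (lam * t) = - R t x th / 2" by (simp add: \<epsilon>_def)
      then show False using main[OF e t, of x th] n by simp
    qed
  qed
qed


theorem mainTheorem1:
  fixes R :: "real \<Rightarrow> real ^ 'd \<Rightarrow> real \<Rightarrow> real"
    and R0 :: "real ^ 'd \<Rightarrow> real \<Rightarrow> real"
    and L \<rho> Dx Dth J0 J K T :: real
  assumes "L > 0" and "\<rho> > 0" and "Dx > 0" and "Dth \<ge> 0" and "T > 0"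
    and periodic: "periodic_field L R"
    and C2: "C2_on ({0..<T} \<times> UNIV \<times> UNIV) (uncurry3 R)"
    and pde: "\<And>t x th. 0 < t \<Longrightarrow> t < T \<Longrightarrow>
      partial_t R t x th =
        Dx * laplace_x R t x th
        - div_x (\<lambda>s y a. R s y a *\<^sub>R v1 J0 J \<rho> R s y a) t x th
        + Dth * partial_th (partial_th R) t x th
        - partial_th (\<lambda>s y a. v2 K \<rho> R s y a * R s y a) t x th"
    and init: "\<And>x th. R 0 x th = R0 x th"
    and R0_nonneg: "\<And>x th. R0 x th \<ge> 0"
    and R0_cont: "continuous_on UNIV (\<lambda>p. R0 (fst p) (snd p))"
  shows "\<forall>t x th. 0 \<le> t \<and> t < T \<longrightarrow> R t x th \<ge> 0"
proof -
  let ?S = "{0..<T} \<times> (UNIV::(real^'d) set) \<times> (UNIV::real set)"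
  obtain f1 :: "real \<times> (real^'d) \<times> real \<Rightarrow> (real \<times> (real^'d) \<times> real) \<Rightarrow>\<^sub>L real"
    and f2 :: "real \<times> (real^'d) \<times> real \<Rightarrow> (real \<times> (real^'d) \<times> real) \<Rightarrow>\<^sub>L ((real \<times> (real^'d) \<times> real) \<Rightarrow>\<^sub>L real)"
    where h1: "\<forall>p\<in>?S. (uncurry3 R has_derivative blinfun_apply (f1 p)) (at p within ?S)"
      and cF1: "continuous_on ?S f1"
      and h2: "\<forall>p\<in>?S. (f1 has_derivative blinfun_apply (f2 p)) (at p within ?S)"
      and cF2: "continuous_on ?S f2"
    using C2 unfolding C2_on_def by blast
  have int: "at p within ?S = at p" if "fst p \<in> {0<..<T}" for p
  proof (rule at_within_interior)
    have "interior ?S = {0<..<T} \<times> UNIV \<times> UNIV" by (simp add: interior_Times)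
    then show "p \<in> interior ?S" using that by (cases p) auto
  qed
  have inS: "p \<in> ?S" if "fst p \<in> {0<..<T}" for p using that by (cases p) auto
  have dR: "(uncurry3 R has_derivative blinfun_apply (f1 p)) (at p)" if "fst p \<in> {0<..<T}" for p
    using h1[rule_format, OF inS[OF that]] unfolding int[OF that] .
  have dF1: "(f1 has_derivative blinfun_apply (f2 p)) (at p)" if "fst p \<in> {0<..<T}" for p
    using h2[rule_format, OF inS[OF that]] unfolding int[OF that] .
  have cR: "continuous_on ?S (uncurry3 R)"
    unfolding continuous_on_eq_continuous_within
    using h1 has_derivative_continuous by blast
  have init0: "R 0 x th \<ge> 0" for x th using init R0_nonneg by simp
  show ?thesis
  proof (intro allI impI)
    fix t x th assume t: "0 \<le> t \<and> t < T"
    show "R t x th \<ge> 0"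
    proof (cases "t = 0")
      case True then show ?thesis using init0 by simp
    next
      case False
      then have tp: "0 < t" using t by simp
      have "\<forall>t'\<in>{0..t}. \<forall>x th. 0 \<le> R t' x th"
        by (rule core[OF assms(1-4) periodic pde init0 dR dF1 cR cF1 cF2 tp]) (use t in auto)
      then show ?thesis using tp by auto
    qed
  qed
qed

end
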